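(* Let $\bar x \in \mathrm{dom}\,\psi$, $H>0$, let $F'(\bar x)\in\partial F(\bar x)$ be a chosen subgradient with $F'(\bar x)\neq 0$, let $A = A_H(\bar x) = \frac{1}{\sigma}\sqrt{\frac{H}{3}\|F'(\bar x)\|_*}$ and $T = T_A(\bar x)$. Assume that $$f(T) \le f(\bar x) + \langle \nabla f(\bar x), T - \bar x\rangle + \tfrac12 \langle \nabla^2 f(\bar x)(T-\bar x), T - \bar x\rangle + \tfrac{H}{6}\|T - \bar x\|^3 .$$ Then $$F(\bar x) - F(T) \;\ge\; \tfrac12 \langle \nabla^2 f(\bar x)(T-\bar x), T-\bar x\rangle + \tfrac12 \sigma A \|T - \bar x\|^2 .$$
   Context: $\mathbb{E}$ is a finite-dimensional real vector space with an arbitrary norm $\|\cdot\|$; $\mathbb{E}^*$ is its dual with dual norm $\|g\|_* = \max\{\langle g, x\rangle : \|x\|\le 1\}$. $F = f + \psi$, where $\psi$ is a closed convex function with $\mathrm{dom}\,\psi \subseteq \mathbb{E}$ and $f$ is convex and twice continuously differentiable; subgradients of $F$ have the form $F'(\bar x) = \nabla f(\bar x) + \psi'(\bar x)$ with $\psi'(\bar x) \in \partial \psi(\bar x)$. The scaling function $d$ is differentiable and satisfies, for some $\sigma\in(0,1]$ and all $x,y \in \mathrm{dom}\,\psi$: $d(y) \ge d(x) + \langle \nabla d(x), y-x\rangle + \frac{\sigma}{2}\|y-x\|^2$ and $\|\nabla d(x) - \nabla d(y)\|_* \le \|x-y\|$. Bregman distance: $\rho(x,y) = d(y) - d(x) -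 \langle \nabla d(x), y-x\rangle$. For $A>0$, $$T_A(\bar x) = \arg\min_{y\in\mathrm{dom}\,\psi}\Big[ f(\bar x) + \langle \nabla f(\bar x), y-\bar x\rangle + \tfrac12 \langle \nabla^2 f(\bar x)(y-\bar x), y-\bar x\rangle + A\rho(\bar x,y) + \psi(y)\Big].$$ *)

theory Defs
  imports "HOL-Analysis.Analysis"
begin

text \<open>An arbitrary norm on the finite-dimensional space 'a (the library norm is Euclidean,
so the paper's norm is a separate function).\<close>
definition is_norm :: "('a::real_vector \<Rightarrow> real) \<Rightarrow> bool" where
  "is_norm N \<longleftrightarrow> (\<forall>x y. N (x + y) \<le> N x + N y) \<and> (\<forall>c x. N (c *\<^sub>R x) = \<bar>c\<bar> * N x)
      \<and> (\<forall>x. N x = 0 \<longleftrightarrow> x = 0)"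

text \<open>Dual norm; the dual space is identified with 'a via the inner product.\<close>
definition dual_norm :: "('a::real_inner \<Rightarrow> real) \<Rightarrow> 'a \<Rightarrow> real" where
  "dual_norm N g = Sup {g \<bullet> x | x. N x \<le> 1}"

text \<open>A closed convex function with effective domain D: real-valued on D, +infinity outside,
convex, with closed epigraph.\<close>
definition closed_convex_fun :: "'a::real_normed_vector set \<Rightarrow> ('a \<Rightarrow> real) \<Rightarrow> bool" where
  "closed_convex_fun D psi \<longleftrightarrow> convex D \<and> convex_on D psi
      \<and> closed {(x, t). x \<in> D \<and> psi x \<le> t}"

definition is_subgrad :: "'a::real_inner set \<Rightarrow> ('a \<Rightarrow> real) \<Rightarrow> 'a \<Rightarrow> 'a \<Rightarrow> bool" where
  "is_subgrad D psi x g \<longleftrightarrow> (\<forall>y\<in>D. psi y \<ge> psi x + g \<bullet> (y - x))"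

definition bregman :: "('a::real_inner \<Rightarrow> real) \<Rightarrow> ('a \<Rightarrow> 'a) \<Rightarrow> 'a \<Rightarrow> 'a \<Rightarrow> real" where
  "bregman d gd x y = d y - d x - gd x \<bullet> (y - x)"

definition model :: "('a::real_inner \<Rightarrow> real) \<Rightarrow> ('a \<Rightarrow> 'a) \<Rightarrow> ('a \<Rightarrow> 'a \<Rightarrow>\<^sub>L 'a)
     \<Rightarrow> ('a \<Rightarrow> real) \<Rightarrow> ('a \<Rightarrow> 'a) \<Rightarrow> ('a \<Rightarrow> real) \<Rightarrow> real \<Rightarrow> 'a \<Rightarrow> 'a \<Rightarrow> real" where
  "model f gf hf d gd psi A xb y =
     f xb + gf xb \<bullet> (y - xb) + 1/2 * ((hf xb) (y - xb) \<bullet> (y - xb))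
     + A * bregman d gd xb y + psi y"

text \<open>T is T_A(xb): a minimizer of the model over dom psi (the minimizer is unique).\<close>
definition is_T :: "('a::real_inner \<Rightarrow> real) \<Rightarrow> ('a \<Rightarrow> 'a) \<Rightarrow> ('a \<Rightarrow> 'a \<Rightarrow>\<^sub>L 'a)
     \<Rightarrow> ('a \<Rightarrow> real) \<Rightarrow> ('a \<Rightarrow> 'a) \<Rightarrow> 'a set \<Rightarrow> ('a \<Rightarrow> real) \<Rightarrow> real \<Rightarrow> 'a \<Rightarrow> 'a \<Rightarrow> bool" where
  "is_T f gf hf d gd D psi A xb T \<longleftrightarrow> T \<in> D \<and>
     (\<forall>y\<in>D. model f gf hf d gd psi A xb T \<le> model f gf hf d gd psi A xb y)"

end

theory Submission
  imports Defs
begin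

lemma isn_zero: "is_norm N \<Longrightarrow> N 0 = 0" unfolding is_norm_def by auto
lemma isn_neg: "is_norm N \<Longrightarrow> N (- x) = N x"
  unfolding is_norm_def by (metis abs_minus_cancel abs_one mult_1 scaleR_minus1_left)
lemma isn_nonneg: "is_norm N \<Longrightarrow> N x \<ge> 0"
proof -
  assume n: "is_norm N"
  have "N (x + - x) \<le> N x + N (-x)" using n unfolding is_norm_def by blast
  then show ?thesis using isn_zero[OF n] isn_neg[OF n] by simp
qed

lemma isn_convex: "is_norm N \<Longrightarrow> convex_on UNIV N"
proof (rule convex_onI)
  fix t :: real and x y assume n: "is_norm N" and t: "0 < t" "t < 1"
  have "N ((1 - t) *\<^sub>R x + t *\<^sub>R y) \<le> N ((1 - t) *\<^sub>R x) + N (t *\<^sub>R y)" using n unfolding is_norm_def by blast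
  also have "\<dots> = (1-t) * N x + t * N y" using n t unfolding is_norm_def by simp
  finally show "N ((1 - t) *\<^sub>R x + t *\<^sub>R y) \<le> (1 - t) * N x + t * N y" .
qed simp

lemma isn_lower:
  fixes N :: "'a::euclidean_space \<Rightarrow> real"
  assumes n: "is_norm N" shows "\<exists>m>0. \<forall>x. m * norm x \<le> N x"
proof -
  have c: "continuous_on UNIV N" using convex_on_continuous[OF open_UNIV isn_convex[OF n]] .
  have ne: "sphere (0::'a) 1 \<noteq> {}"
    by (metis empty_iff norm_Basis one_neq_zero SOME_Basis mem_sphere_0)
  obtain z where z: "z \<in> sphere 0 1" "\<forall>y\<in>sphere 0 1. N z \<le> N y"
    using continuous_attains_inf[OF compact_sphere ne continuous_on_subset[OF c]] by blast
  have zpos: "N z > 0" using z(1) n isn_nonneg[OF n] unfolding is_norm_def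
    by (metis less_eq_real_def mem_sphere_0 norm_zero zero_neq_one)
  have "N z * norm x \<le> N x" for x
  proof (cases "x = 0")
    case True then show ?thesis using isn_zero[OF n] by simp
  next
    case False
    have "(inverse (norm x)) *\<^sub>R x \<in> sphere 0 1" using False by simp
    then have "N z \<le> N ((inverse (norm x)) *\<^sub>R x)" using z by blast
    also have "\<dots> = N x / norm x" using n unfolding is_norm_def by (simp add: divide_inverse_commute)
    finally show ?thesis using False by (simp add: pos_le_divide_eq)
  qed
  then show ?thesis using zpos by blast
qed

lemma dual_bdd:
  fixes N :: "'a::euclidean_space \<Rightarrow> real"
  assumes n: "is_norm N" shows "bdd_above {g \<bullet> x | x. N x \<le> 1}"
proof -
  obtain m where m: "m > 0" "\<forall>x. m * norm x \<le> N x" using isn_lower[OF n] by blast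
  have "g \<bullet> x \<le> norm g / m" if "N x \<le> 1" for x
  proof -
    have "m * norm x \<le> 1" using m that by (meson order.trans)
    then have "norm x \<le> 1 / m" using m by (simp add: le_divide_eq mult.commute)
    have "g \<bullet> x \<le> norm g * norm x" by (meson Cauchy_Schwarz_ineq2 abs_le_D1)
    also have "\<dots> \<le> norm g * (1/m)" using \<open>norm x \<le> 1 / m\<close> by (intro mult_left_mono) auto
    finally show ?thesis by simp
  qed
  then show ?thesis unfolding bdd_above_def by blast
qed

lemma dual_ge:
  fixes N :: "'a::euclidean_space \<Rightarrow> real"
  assumes n: "is_norm N" and "N x \<le> 1" shows "g \<bullet> x \<le> dual_norm N g"
  unfolding dual_norm_def using assms by (intro cSup_upper[OF _ dual_bdd[OF n]]) blast

lemma dual_nonneg: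
  fixes N :: "'a::euclidean_space \<Rightarrow> real"
  assumes n: "is_norm N" shows "0 \<le> dual_norm N g"
  using dual_ge[OF n, of 0 g] isn_zero[OF n] by simp

lemma dual_pos:
  fixes N :: "'a::euclidean_space \<Rightarrow> real"
  assumes n: "is_norm N" and g: "g \<noteq> 0" shows "0 < dual_norm N g"
proof -
  have Ng: "N g > 0" using n g isn_nonneg[OF n] unfolding is_norm_def by (metis less_eq_real_def)
  have "N (inverse (N g) *\<^sub>R g) = \<bar>inverse (N g)\<bar> * N g" using n unfolding is_norm_def by blast
  then have "N (inverse (N g) *\<^sub>R g) = 1" using Ng by simp
  then have "g \<bullet> (inverse (N g) *\<^sub>R g) \<le> dual_norm N g" using dual_ge[OF n, of "inverse (N g) *\<^sub>R g" g] by linarith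
  moreover have "g \<bullet> (inverse (N g) *\<^sub>R g) > 0" using Ng g by simp
  ultimately show ?thesis by linarith
qed

lemma dual_inner:
  fixes N :: "'a::euclidean_space \<Rightarrow> real"
  assumes n: "is_norm N" shows "- (g \<bullet> r) \<le> dual_norm N g * N r"
proof (cases "r = 0")
  case True then show ?thesis using isn_zero[OF n] by simp
next
  case False
  have Nr: "N r > 0" using n False isn_nonneg[OF n] unfolding is_norm_def by (metis less_eq_real_def)
  have "N ((- inverse (N r)) *\<^sub>R r) = \<bar>- inverse (N r)\<bar> * N r" using n unfolding is_norm_def by blast
  then have "N ((- inverse (N r)) *\<^sub>R r) = 1" using Nr by simp
  then have "g \<bullet> ((- inverse (N r)) *\<^sub>R r) \<le> dual_norm N g" using dual_ge[OF n, of "(- inverse (N r)) *\<^sub>R r" g] by linarith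
  then have "- (g \<bullet> r) / N r \<le> dual_norm N g" by (simp add: divide_inverse_commute)
  then have "- (g \<bullet> r) / N r \<le> dual_norm N g" by simp
  then show ?thesis using Nr by (simp only: pos_divide_le_eq[OF Nr])
qed

lemma line_deriv:
  fixes f :: "'a::real_inner \<Rightarrow> real"
  assumes "(f has_derivative (\<lambda>h. G \<bullet> h)) (at (x + t *\<^sub>R v))"
  shows "((\<lambda>s. f (x + s *\<^sub>R v)) has_real_derivative (G \<bullet> v)) (at t)"
proof -
  have "((\<lambda>s. x + s *\<^sub>R v) has_derivative (\<lambda>h. h *\<^sub>R v)) (at t)"
    by (auto intro!: derivative_eq_intros)
  from has_derivative_compose[OF this assms]
  have "((\<lambda>s. f (x + s *\<^sub>R v)) has_derivative (\<lambda>h. G \<bullet> (h *\<^sub>R v))) (at t)" .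
  moreover have "(\<lambda>h. G \<bullet> (h *\<^sub>R v)) = (*) (G \<bullet> v)" by (auto simp: mult.commute)
  ultimately show ?thesis unfolding has_field_derivative_def by simp
qed

lemma tangent:
  fixes f :: "'a::real_inner \<Rightarrow> real"
  assumes cv: "convex_on UNIV f" and d: "(f has_derivative (\<lambda>h. G \<bullet> h)) (at x)"
  shows "f y \<ge> f x + G \<bullet> (y - x)"
proof (rule ccontr)
  assume neg: "\<not> ?thesis"
  define k where "k s = f (x + s *\<^sub>R (y - x)) - f x - s * (f y - f x)" for s
  have "((\<lambda>s. f (x + s *\<^sub>R (y - x))) has_real_derivative (G \<bullet> (y - x))) (at 0)"
    by (rule line_deriv) (use d in simp)
  then have "(k has_real_derivative (G \<bullet> (y - x) - (f y - f x))) (at 0)"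
    unfolding k_def by (auto intro!: derivative_eq_intros)
  moreover have "G \<bullet> (y - x) - (f y - f x) > 0" using neg by simp
  ultimately obtain e where e: "e > 0" "\<forall>h>0. h < e \<longrightarrow> k 0 < k (0 + h)"
    using DERIV_pos_inc_right by blast
  define h where "h = min (e/2) 1"
  have h: "h > 0" "h < e" "h \<le> 1" using e unfolding h_def by auto
  have "k 0 < k h" using e h by simp
  moreover have "k 0 = 0" unfolding k_def by simp
  moreover have "f ((1 - h) *\<^sub>R x + h *\<^sub>R y) \<le> (1 - h) * f x + h * f y"
    using convex_onD[OF cv, of h x y] h by simp
  moreover have "(1 - h) *\<^sub>R x + h *\<^sub>R y = x + h *\<^sub>R (y - x)" by (simp add: algebra_simps)
  ultimately show False unfolding k_def by (simp add: algebra_simps)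
qed

lemma hess_psd:
  fixes f :: "'a::real_inner \<Rightarrow> real"
  assumes cv: "convex_on UNIV f"
    and f_grad: "\<And>x. (f has_derivative (\<lambda>h. gf x \<bullet> h)) (at x)"
    and f_hess: "\<And>x. (gf has_derivative blinfun_apply (hf x)) (at x)"
  shows "(hf x) r \<bullet> r \<ge> 0"
proof (rule ccontr)
  assume neg: "\<not> ?thesis"
  define k where "k s = gf (x + s *\<^sub>R r) \<bullet> r" for s
  have mono: "k s \<ge> k 0" if s: "s > 0" for s
  proof -
    have "f (x + s *\<^sub>R r) \<ge> f x + gf x \<bullet> (s *\<^sub>R r)" using tangent[OF cv f_grad] by (metis add_diff_cancel_left')
    moreover have "f x \<ge> f (x + s *\<^sub>R r) + gf (x + s *\<^sub>R r) \<bullet> (x - (x + s *\<^sub>R r))" using tangent[OF cv f_grad] by blast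
    ultimately have "s * (gf (x + s *\<^sub>R r) \<bullet> r - gf x \<bullet> r) \<ge> 0" by (simp add: algebra_simps)
    then show ?thesis using s unfolding k_def by (simp add: zero_le_mult_iff)
  qed
  have "((\<lambda>s. x + s *\<^sub>R r) has_derivative (\<lambda>h. h *\<^sub>R r)) (at 0)"
    by (auto intro!: derivative_eq_intros)
  from has_derivative_compose[OF this f_hess]
  have "((\<lambda>s. gf (x + s *\<^sub>R r)) has_derivative (\<lambda>h. (hf x) (h *\<^sub>R r))) (at 0)" by simp
  then have "(k has_derivative (\<lambda>h. (hf x) (h *\<^sub>R r) \<bullet> r)) (at 0)"
    unfolding k_def by (auto intro!: derivative_eq_intros)
  moreover have "(\<lambda>h. (hf x) (h *\<^sub>R r) \<bullet> r) = (*) ((hf x) r \<bullet> r)"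
    by (auto simp: blinfun.scaleR_right mult.commute)
  ultimately have "(k has_real_derivative ((hf x) r \<bullet> r)) (at 0)" unfolding has_field_derivative_def by simp
  then obtain e where e: "e > 0" "\<forall>h>0. h < e \<longrightarrow> k 0 > k (0 + h)"
    using DERIV_neg_dec_right neg by (metis not_le)
  then have "k 0 > k (e/2)" by simp
  then show False using mono[of "e/2"] e by simp
qed

theorem lemma2:
  fixes N :: "'a::euclidean_space \<Rightarrow> real"
    and f :: "'a \<Rightarrow> real" and gf :: "'a \<Rightarrow> 'a" and hf :: "'a \<Rightarrow> 'a \<Rightarrow>\<^sub>L 'a"
    and psi :: "'a \<Rightarrow> real" and D :: "'a set"
    and d :: "'a \<Rightarrow> real" and gd :: "'a \<Rightarrow> 'a"
    and \<sigma> H A :: real and xb g T :: 'a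
  assumes norm: "is_norm N"
    and f_convex: "convex_on UNIV f"
    and f_grad: "\<And>x. (f has_derivative (\<lambda>h. gf x \<bullet> h)) (at x)"
    and f_hess: "\<And>x. (gf has_derivative blinfun_apply (hf x)) (at x)"
    and hess_cont: "continuous_on UNIV hf"
    and psi_closed: "closed_convex_fun D psi"
    and sigma: "0 < \<sigma>" "\<sigma> \<le> 1"
    and d_grad: "\<And>x. x \<in> D \<Longrightarrow> (d has_derivative (\<lambda>h. gd x \<bullet> h)) (at x)"
    and d_strong: "\<And>x y. x \<in> D \<Longrightarrow> y \<in> D \<Longrightarrow>
                     d y \<ge> d x + gd x \<bullet> (y - x) + \<sigma> / 2 * (N (y - x))\<^sup>2"
    and d_lip: "\<And>x y. x \<in> D \<Longrightarrow> y \<in> D \<Longrightarrow> dual_norm N (gd x - gd y) \<le> N (x - y)"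
    and xb: "xb \<in> D"
    and H: "H > 0"
    and g_sub: "is_subgrad D psi xb g"
    and Fprime_nz: "gf xb + g \<noteq> 0"
    and A_def: "A = 1 / \<sigma> * sqrt (H / 3 * dual_norm N (gf xb + g))"
    and T_def: "is_T f gf hf d gd D psi A xb T"
    and upper: "f T \<le> f xb + gf xb \<bullet> (T - xb) + 1/2 * ((hf xb) (T - xb) \<bullet> (T - xb))
                      + H / 6 * (N (T - xb)) ^ 3"
  shows "(f xb + psi xb) - (f T + psi T) \<ge>
           1/2 * ((hf xb) (T - xb) \<bullet> (T - xb)) + 1/2 * \<sigma> * A * (N (T - xb))\<^sup>2"
proof -
  define r where "r = T - xb"
  define n where "n = N r"
  define Q where "Q = (hf xb) r \<bullet> r"
  define c where "c = gf xb \<bullet> r + psi T - psi xb"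
  define dn where "dn = dual_norm N (gf xb + g)"
  define s where "s = sqrt (H / 3 * dn)"
  have TD: "T \<in> D" and Tmin: "\<And>y. y \<in> D \<Longrightarrow> model f gf hf d gd psi A xb T \<le> model f gf hf d gd psi A xb y"
    using T_def unfolding is_T_def by auto
  have cD: "convex D" and cpsi: "convex_on D psi" using psi_closed unfolding closed_convex_fun_def by auto
  have n0: "n \<ge> 0" unfolding n_def using isn_nonneg[OF norm] .
  have Q0: "Q \<ge> 0" unfolding Q_def using hess_psd[OF f_convex f_grad f_hess] .
  have dn0: "dn > 0" unfolding dn_def using dual_pos[OF norm Fprime_nz] .
  have s0: "s > 0" unfolding s_def using dn0 H by simp
  have s2: "s^2 = H / 3 * dn" unfolding s_def using dn0 H by simp
  have sA: "\<sigma> * A = s" unfolding A_def s_def dn_def using sigma by simp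
  have A0: "A \<ge> 0" using sA s0 sigma by (metis less_eq_real_def mult_pos_pos mult_less_cancel_left_pos mult_zero_right not_le)
  have st1: "d T \<ge> d xb + gd xb \<bullet> r + \<sigma> / 2 * n^2" using d_strong[OF xb TD] unfolding r_def n_def .
  have st2: "d xb \<ge> d T + gd T \<bullet> (xb - T) + \<sigma> / 2 * (N (xb - T))^2" using d_strong[OF TD xb] .
  have "N (xb - T) = n" unfolding n_def r_def using isn_neg[OF norm, of "T - xb"] by simp
  with st1 st2 have strong: "(gd T - gd xb) \<bullet> r \<ge> \<sigma> * n^2"
    unfolding r_def by (simp add: algebra_simps inner_diff_right)
  \<comment> \<open>optimality along the segment\<close>
  define phi where "phi t = t * c + t^2 / 2 * Q + A * (d (xb + t *\<^sub>R r) - t * (gd xb \<bullet> r))" for t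
  have phimin: "phi 1 \<le> phi t" if t: "0 \<le> t" "t \<le> 1" for t
  proof -
    have eq: "xb + t *\<^sub>R r = (1 - t) *\<^sub>R xb + t *\<^sub>R T" unfolding r_def by (simp add: algebra_simps)
    have yD: "xb + t *\<^sub>R r \<in> D" unfolding eq using convexD[OF cD xb TD, of "1-t" t] t by simp
    have ps: "psi (xb + t *\<^sub>R r) \<le> (1 - t) * psi xb + t * psi T"
      unfolding eq using convex_onD[OF cpsi, of t xb T] t xb TD by simp
    have m: "model f gf hf d gd psi A xb T \<le> model f gf hf d gd psi A xb (xb + t *\<^sub>R r)" using Tmin[OF yD] .
    have hl: "(hf xb) (t *\<^sub>R r) \<bullet> (t *\<^sub>R r) = t^2 * Q"
      unfolding Q_def by (simp add: blinfun.scaleR_right power2_eq_square)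
    have TT: "T = xb + r" unfolding r_def by simp
    from m have "f xb + gf xb \<bullet> r + 1/2 * Q + A * (d T - d xb - gd xb \<bullet> r) + psi T
        \<le> f xb + t * (gf xb \<bullet> r) + 1/2 * (t^2 * Q) + A * (d (xb + t *\<^sub>R r) - d xb - t * (gd xb \<bullet> r)) + psi (xb + t *\<^sub>R r)"
      unfolding model_def bregman_def hl[symmetric] using TT Q_def by simp
    with ps show ?thesis unfolding phi_def c_def using TT by (simp add: algebra_simps)
  qed
  have "((\<lambda>t. d (xb + t *\<^sub>R r)) has_real_derivative (gd T \<bullet> r)) (at 1)"
    by (rule line_deriv) (use d_grad[OF TD] in \<open>simp add: r_def\<close>)
  then have dphi: "(phi has_real_derivative (c + Q + A * (gd T \<bullet> r - gd xb \<bullet> r))) (at 1)"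
    unfolding phi_def by (auto intro!: derivative_eq_intros)
  have key: "c + Q + A * (gd T \<bullet> r - gd xb \<bullet> r) \<le> 0"
  proof (rule ccontr)
    assume "\<not> ?thesis"
    then obtain e where e: "e > 0" "\<forall>h>0. h < e \<longrightarrow> phi (1 - h) < phi 1"
      using DERIV_pos_inc_left[OF dphi] by (metis not_le)
    define h where "h = min (e/2) 1"
    have "h > 0" "h < e" "h \<le> 1" using e unfolding h_def by auto
    then show False using e phimin[of "1 - h"] by auto
  qed
  have "A * (gd T \<bullet> r - gd xb \<bullet> r) \<ge> A * (\<sigma> * n^2)"
    using strong A0 by (simp add: inner_diff_left mult_left_mono)
  moreover have "A * (\<sigma> * n^2) = s * n^2" using sA by (simp add: algebra_simps)
  ultimately have c_up: "c \<le> - Q - s * n^2" using key by (simp add: algebra_simps)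
  have c_lo: "- dn * n \<le> c"
  proof -
    have "psi T \<ge> psi xb + g \<bullet> r" using g_sub TD unfolding is_subgrad_def r_def by blast
    moreover have "- ((gf xb + g) \<bullet> r) \<le> dn * n" unfolding dn_def n_def using dual_inner[OF norm] .
    ultimately show ?thesis unfolding c_def by (simp add: inner_add_left)
  qed
  have bound: "H * n \<le> 3 * s"
  proof (cases "n = 0")
    case True then show ?thesis using s0 by simp
  next
    case False
    then have np: "n > 0" using n0 by simp
    have "s * n^2 \<le> dn * n" using c_up c_lo Q0 by linarith
    then have "s * n \<le> dn" using np by (simp add: power2_eq_square)
    then have "H * (s * n) \<le> H * dn" using H by simp
    also have "\<dots> = 3 * s^2" using s2 by simp
    finally have "s * (H * n) \<le> s * (3 * s)" by (simp add: power2_eq_square algebra_simps)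
    then show ?thesis using s0 by simp
  qed
  have cub: "H / 6 * n^3 \<le> s / 2 * n^2"
  proof -
    have "H * n * n^2 \<le> 3 * s * n^2" using bound n0 by (simp add: mult_right_mono)
    then show ?thesis by (simp add: power3_eq_cube power2_eq_square algebra_simps)
  qed
  have up: "f T \<le> f xb + gf xb \<bullet> r + 1/2 * Q + H / 6 * n^3"
    using upper unfolding r_def n_def Q_def .
  have "(f xb + psi xb) - (f T + psi T) \<ge> 1/2 * Q + 1/2 * s * n^2"
    using up c_up cub unfolding c_def by linarith
  then show ?thesis unfolding Q_def n_def r_def using sA by (simp add: mult.assoc)
qed

end
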